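(* Let $T$ be a split Leibniz triple system with symmetric root system $\Lambda^1$, suppose $\Lambda^0$ is symmetric, and fix $\alpha_0\in\Lambda^1$. Let $\alpha_1,\alpha_2,\alpha_3\in\Lambda^1_{\alpha_0}\cup\{0\}$ with $\alpha_1+\alpha_2+\alpha_3=0$ and let $\bar\epsilon\in\Lambda^1\setminus\Lambda^1_{\alpha_0}$. Then, with brackets computed in the standard embedding $L$: (1) $[\{T_{\alpha_1},T_{\alpha_2},T_{\alpha_3}\},T_{\bar\epsilon}]=0$; (2) if $\bar\epsilon\in\Lambda^0$, then $[\{T_{\alpha_1},T_{\alpha_2},T_{\alpha_3}\},L^0_{\bar\epsilon}]=0$; (3) $[[\{T_{\alpha_1},T_{\alpha_2},T_{\alpha_3}\},T_0],T_{\bar\epsilon}]=0$.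
   Context: A Leibniz triple system is a vector space $T$ over a field $\mathbb{K}$ with a trilinear product $\{\cdot,\cdot,\cdot\}$ satisfying, for all $a,b,c,d,e\in T$: $\{a,\{b,c,d\},e\}=\{\{a,b,c\},d,e\}-\{\{a,c,b\},d,e\}-\{\{a,d,b\},c,e\}+\{\{a,d,c\},b,e\}$ and $\{a,b,\{c,d,e\}\}=\{\{a,b,c\},d,e\}-\{\{a,b,d\},c,e\}-\{\{a,b,e\},c,d\}+\{\{a,b,e\},d,c\}$. Its standard embedding is the right Leibniz algebra $L=L^0\oplus L^1$ ($L^0$ the span of symbols $x\otimes y$, $L^1=T$) with product $[(x\otimes y,z),(u\otimes v,w)]=(\{x,y,u\}\otimes v-\{x,y,v\}\otimes u+z\otimes w,\ \{x,y,w\}+\{z,u,v\}-\{z,v,u\})$; so $[x,y]=x\otimes y$ and $\{x,y,z\}=[[x,y],z]$ for $x,y,z\in T$. Let $H^0$ be a maximal abelian subalgebra of $L^0$; for $\alpha\in(H^0)^*$ put $T_\alpha=\{t\in T:[t,h]=\alpha(h)t\ \forall h\in H^0\}$, $L^0_\alpha=\{v\in L^0:[v,h]=\alpha(h)v\ \forall h\in H^0\}$, $\Lambda^1=\{\alpha\neq0:T_\alpha\neq0\}$, $\Lambda^0=\{\alpha\neq0:L^0_\alpha\neq0\}$. $T$ is split (w.r.t. $H^0$) if $T=T_0\oplus\bigoplus_{\alpha\in\Lambda^1}T_\alpha$, $\{T_0,T_0,T_0\}=0$ and $\{T_\alpha,T_{-\alpha},T_0\}=0$ for all $\alpha\in\Lambda^1$.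 A set $\Lambda\subset(H^0)^*$ is symmetric if $\alpha\in\Lambda$ implies $-\alpha\in\Lambda$. Two roots $\alpha,\beta\in\Lambda^1$ are connected if there is a family $\alpha_1,\dots,\alpha_{2n+1}\in\Lambda^1\cup\{0\}$ with: $\alpha_1+\dots+\alpha_{2k+1}\in\Lambda^1$ for $k=0,\dots,n$; $\alpha_1+\dots+\alpha_{2k}\in\Lambda^0$ for $k=1,\dots,n$; $\alpha_1=\alpha$ and $\alpha_1+\dots+\alpha_{2n+1}\in\{\beta,-\beta\}$. $\Lambda^1_{\alpha_0}$ denotes the set of $\beta\in\Lambda^1$ connected with $\alpha_0$. *)

theory Defs
  imports Main "HOL.Vector_Spaces"
begin

definition leibniz_triple_system ::
  "('k::field \<Rightarrow> 'v::ab_group_add \<Rightarrow> 'v) \<Rightarrow> ('v \<Rightarrow> 'v \<Rightarrow> 'v \<Rightarrow> 'v) \<Rightarrow> bool" where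
  "leibniz_triple_system scale trip \<longleftrightarrow>
     vector_space scale \<and>
     (\<forall>b c. Vector_Spaces.linear scale scale (\<lambda>a. trip a b c)) \<and>
     (\<forall>a c. Vector_Spaces.linear scale scale (\<lambda>b. trip a b c)) \<and>
     (\<forall>a b. Vector_Spaces.linear scale scale (\<lambda>c. trip a b c)) \<and>
     (\<forall>a b c d e. trip a (trip b c d) e =
        trip (trip a b c) d e - trip (trip a c b) d e - trip (trip a d b) c e + trip (trip a d c) b e) \<and>
     (\<forall>a b c d e. trip a b (trip c d e) =
        trip (trip a b c) d e - trip (trip a b d) c e - trip (trip a b e) c d + trip (trip a b e) d c)"

text \<open>An element of L^0 is a finite sum of symbols x \<otimes> y, written as a list of pairs
  (scalars are absorbed into the first factor). Two formal sums are identified iff they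
  act identically on T = L^1 from the left (w \<mapsto> [x\<otimes>y, w] = {x,y,w}) and from the
  right (z \<mapsto> [z, x\<otimes>y] = {z,x,y} - {z,y,x}). Thus L^0 is realised as the image of
  these formal sums under the map l0_img into pairs of maps T \<Rightarrow> T.\<close>

type_synonym 'v L0elem = "('v \<Rightarrow> 'v) \<times> ('v \<Rightarrow> 'v)"

definition l0_img :: "('v::ab_group_add \<Rightarrow> 'v \<Rightarrow> 'v \<Rightarrow> 'v) \<Rightarrow> ('v \<times> 'v) list \<Rightarrow> 'v L0elem" where
  "l0_img trip xs =
     ((\<lambda>w. sum_list (map (\<lambda>(x, y). trip x y w) xs)),
      (\<lambda>z. sum_list (map (\<lambda>(x, y). trip z x y - trip z y x) xs)))"

definition L0 :: "('v::ab_group_add \<Rightarrow> 'v \<Rightarrow> 'v \<Rightarrow> 'v) \<Rightarrow> 'v L0elem set" where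
  "L0 trip = range (l0_img trip)"

definition l0_zero :: "'v::ab_group_add L0elem" where
  "l0_zero = ((\<lambda>_. 0), (\<lambda>_. 0))"

definition l0_add :: "'v::ab_group_add L0elem \<Rightarrow> 'v L0elem \<Rightarrow> 'v L0elem" where
  "l0_add D E = ((\<lambda>w. fst D w + fst E w), (\<lambda>z. snd D z + snd E z))"

definition l0_scale :: "('k \<Rightarrow> 'v \<Rightarrow> 'v) \<Rightarrow> 'k \<Rightarrow> 'v L0elem \<Rightarrow> 'v L0elem" where
  "l0_scale scale a D = ((\<lambda>w. scale a (fst D w)), (\<lambda>z. scale a (snd D z)))"

text \<open>Product of formal sums in L^0:
  [x\<otimes>y, u\<otimes>v] = {x,y,u}\<otimes>v - {x,y,v}\<otimes>u.\<close>

definition brk_rep :: "('v::ab_group_add \<Rightarrow> 'v \<Rightarrow> 'v \<Rightarrow> 'v) \<Rightarrow> ('v \<times> 'v) list \<Rightarrow> ('v \<times> 'v) list \<Rightarrow> ('v \<times> 'v) list" where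
  "brk_rep trip xs ys =
     concat (map (\<lambda>(x, y). concat (map (\<lambda>(u, v). [(trip x y u, v), (- trip x y v, u)]) ys)) xs)"

definition br_L0L0 :: "('v::ab_group_add \<Rightarrow> 'v \<Rightarrow> 'v \<Rightarrow> 'v) \<Rightarrow> 'v L0elem \<Rightarrow> 'v L0elem \<Rightarrow> 'v L0elem" where
  "br_L0L0 trip D E =
     l0_img trip (brk_rep trip (SOME xs. l0_img trip xs = D) (SOME ys. l0_img trip ys = E))"

definition br_TT :: "('v::ab_group_add \<Rightarrow> 'v \<Rightarrow> 'v \<Rightarrow> 'v) \<Rightarrow> 'v \<Rightarrow> 'v \<Rightarrow> 'v L0elem" where
  "br_TT trip x y = l0_img trip [(x, y)]"

definition br_L0T :: "'v L0elem \<Rightarrow> 'v \<Rightarrow> 'v" where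
  "br_L0T D w = fst D w"

definition br_TL0 :: "'v \<Rightarrow> 'v L0elem \<Rightarrow> 'v" where
  "br_TL0 z D = snd D z"

definition abelian_subalg_L0 ::
  "('k \<Rightarrow> 'v::ab_group_add \<Rightarrow> 'v) \<Rightarrow> ('v \<Rightarrow> 'v \<Rightarrow> 'v \<Rightarrow> 'v) \<Rightarrow> 'v L0elem set \<Rightarrow> bool" where
  "abelian_subalg_L0 scale trip H \<longleftrightarrow>
     H \<subseteq> L0 trip \<and> l0_zero \<in> H \<and>
     (\<forall>h\<in>H. \<forall>h'\<in>H. l0_add h h' \<in> H) \<and>
     (\<forall>a. \<forall>h\<in>H. l0_scale scale a h \<in> H) \<and>
     (\<forall>h\<in>H. \<forall>h'\<in>H. br_L0L0 trip h h' = l0_zero)"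

definition max_abelian_subalg_L0 ::
  "('k \<Rightarrow> 'v::ab_group_add \<Rightarrow> 'v) \<Rightarrow> ('v \<Rightarrow> 'v \<Rightarrow> 'v \<Rightarrow> 'v) \<Rightarrow> 'v L0elem set \<Rightarrow> bool" where
  "max_abelian_subalg_L0 scale trip H \<longleftrightarrow>
     abelian_subalg_L0 scale trip H \<and>
     (\<forall>H'. abelian_subalg_L0 scale trip H' \<and> H \<subseteq> H' \<longrightarrow> H' = H)"

text \<open>(H^0)^*: linear functionals on H^0; normalised to be 0 outside H^0 so that
  equality of functionals is equality of HOL functions.\<close>

definition dual_H ::
  "('k::field \<Rightarrow> 'v::ab_group_add \<Rightarrow> 'v) \<Rightarrow> 'v L0elem set \<Rightarrow> ('v L0elem \<Rightarrow> 'k) set" where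
  "dual_H scale H = {\<alpha>.
     (\<forall>h\<in>H. \<forall>h'\<in>H. \<alpha> (l0_add h h') = \<alpha> h + \<alpha> h') \<and>
     (\<forall>a. \<forall>h\<in>H. \<alpha> (l0_scale scale a h) = a * \<alpha> h) \<and>
     (\<forall>x. x \<notin> H \<longrightarrow> \<alpha> x = 0)}"

definition T_root ::
  "('k \<Rightarrow> 'v::ab_group_add \<Rightarrow> 'v) \<Rightarrow> 'v L0elem set \<Rightarrow> ('v L0elem \<Rightarrow> 'k) \<Rightarrow> 'v set" where
  "T_root scale H \<alpha> = {t. \<forall>h\<in>H. br_TL0 t h = scale (\<alpha> h) t}"

definition L0_root ::
  "('k \<Rightarrow> 'v::ab_group_add \<Rightarrow> 'v) \<Rightarrow> ('v \<Rightarrow> 'v \<Rightarrow> 'v \<Rightarrow> 'v) \<Rightarrow> 'v L0elem set \<Rightarrow>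
     ('v L0elem \<Rightarrow> 'k) \<Rightarrow> 'v L0elem set" where
  "L0_root scale trip H \<alpha> = {v \<in> L0 trip. \<forall>h\<in>H. br_L0L0 trip v h = l0_scale scale (\<alpha> h) v}"

definition Lambda1 ::
  "('k::field \<Rightarrow> 'v::ab_group_add \<Rightarrow> 'v) \<Rightarrow> 'v L0elem set \<Rightarrow> ('v L0elem \<Rightarrow> 'k) set" where
  "Lambda1 scale H = {\<alpha> \<in> dual_H scale H. \<alpha> \<noteq> (\<lambda>_. 0) \<and> T_root scale H \<alpha> \<noteq> {0}}"

definition Lambda0 ::
  "('k::field \<Rightarrow> 'v::ab_group_add \<Rightarrow> 'v) \<Rightarrow> ('v \<Rightarrow> 'v \<Rightarrow> 'v \<Rightarrow> 'v) \<Rightarrow> 'v L0elem set \<Rightarrow>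
     ('v L0elem \<Rightarrow> 'k) set" where
  "Lambda0 scale trip H = {\<alpha> \<in> dual_H scale H. \<alpha> \<noteq> (\<lambda>_. 0) \<and> L0_root scale trip H \<alpha> \<noteq> {l0_zero}}"

definition symmetric_roots :: "('a \<Rightarrow> 'k::ab_group_add) set \<Rightarrow> bool" where
  "symmetric_roots \<Lambda> \<longleftrightarrow> (\<forall>\<alpha>\<in>\<Lambda>. (\<lambda>h. - \<alpha> h) \<in> \<Lambda>)"

definition split_LTS ::
  "('k::field \<Rightarrow> 'v::ab_group_add \<Rightarrow> 'v) \<Rightarrow> ('v \<Rightarrow> 'v \<Rightarrow> 'v \<Rightarrow> 'v) \<Rightarrow> 'v L0elem set \<Rightarrow> bool" where
  "split_LTS scale trip H \<longleftrightarrow>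
     (let Z = (\<lambda>_. 0); R = Lambda1 scale H \<union> {Z} in
      \<comment> \<open>T = T_0 + sum of T_alpha ...\<close>
      (\<forall>t. \<exists>S f. finite S \<and> S \<subseteq> R \<and> (\<forall>\<alpha>\<in>S. f \<alpha> \<in> T_root scale H \<alpha>) \<and> t = sum f S) \<and>
      \<comment> \<open>... and the sum is direct\<close>
      (\<forall>S f. finite S \<and> S \<subseteq> R \<and> (\<forall>\<alpha>\<in>S. f \<alpha> \<in> T_root scale H \<alpha>) \<and> sum f S = 0
             \<longrightarrow> (\<forall>\<alpha>\<in>S. f \<alpha> = 0)) \<and>
      (\<forall>a\<in>T_root scale H Z. \<forall>b\<in>T_root scale H Z. \<forall>c\<in>T_root scale H Z. trip a b c = 0) \<and>
      (\<forall>\<alpha>\<in>Lambda1 scale H. \<forall>a\<in>T_root scale H \<alpha>. \<forall>b\<in>T_root scale H (\<lambda>h. - \<alpha> h).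
          \<forall>c\<in>T_root scale H Z. trip a b c = 0))"

definition psum :: "(nat \<Rightarrow> 'a \<Rightarrow> 'k::comm_monoid_add) \<Rightarrow> nat \<Rightarrow> 'a \<Rightarrow> 'k" where
  "psum a m = (\<lambda>h. \<Sum>i = 1..m. a i h)"

definition roots_connected ::
  "('a \<Rightarrow> 'k::ab_group_add) set \<Rightarrow> ('a \<Rightarrow> 'k) set \<Rightarrow> ('a \<Rightarrow> 'k) \<Rightarrow> ('a \<Rightarrow> 'k) \<Rightarrow> bool" where
  "roots_connected \<Lambda>1 \<Lambda>0 \<alpha> \<beta> \<longleftrightarrow>
     (\<exists>n a. (\<forall>i\<in>{1..2*n+1}. a i \<in> \<Lambda>1 \<union> {(\<lambda>_. 0)}) \<and>
            (\<forall>k\<le>n. psum a (2*k+1) \<in> \<Lambda>1) \<and>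
            (\<forall>k\<in>{1..n}. psum a (2*k) \<in> \<Lambda>0) \<and>
            a 1 = \<alpha> \<and>
            (psum a (2*n+1) = \<beta> \<or> psum a (2*n+1) = (\<lambda>h. - \<beta> h)))"

definition connected_class ::
  "('a \<Rightarrow> 'k::ab_group_add) set \<Rightarrow> ('a \<Rightarrow> 'k) set \<Rightarrow> ('a \<Rightarrow> 'k) \<Rightarrow> ('a \<Rightarrow> 'k) set" where
  "connected_class \<Lambda>1 \<Lambda>0 \<alpha>0 = {\<beta> \<in> \<Lambda>1. roots_connected \<Lambda>1 \<Lambda>0 \<alpha>0 \<beta>}"

end

theory Submission imports Defs begin

locale LTS =
  fixes scale :: "'k::field \<Rightarrow> 'v::ab_group_add \<Rightarrow> 'v"
    and trip :: "'v \<Rightarrow> 'v \<Rightarrow> 'v \<Rightarrow> 'v"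
  assumes lts: "leibniz_triple_system scale trip"
begin

lemma VS: "vector_space scale" using lts by (simp add: leibniz_triple_system_def)
lemma lin1: "Vector_Spaces.linear scale scale (\<lambda>a. trip a b c)" using lts by (simp add: leibniz_triple_system_def)
lemma lin2: "Vector_Spaces.linear scale scale (\<lambda>b. trip a b c)" using lts by (simp add: leibniz_triple_system_def)
lemma lin3: "Vector_Spaces.linear scale scale (\<lambda>c. trip a b c)" using lts by (simp add: leibniz_triple_system_def)
lemma id1: "trip a (trip b c d) e =
        trip (trip a b c) d e - trip (trip a c b) d e - trip (trip a d b) c e + trip (trip a d c) b e"
  using lts by (simp add: leibniz_triple_system_def)
lemma id2: "trip a b (trip c d e) =
        trip (trip a b c) d e - trip (trip a b d) c e - trip (trip a b e) c d + trip (trip a b e) d c"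
  using lts by (simp add: leibniz_triple_system_def)

lemma mh1: "module_hom scale scale (\<lambda>a. trip a b c)" using lin1 by (simp add: module_hom_iff_linear)
lemma mh2: "module_hom scale scale (\<lambda>b. trip a b c)" using lin2 by (simp add: module_hom_iff_linear)
lemma mh3: "module_hom scale scale (\<lambda>c. trip a b c)" using lin3 by (simp add: module_hom_iff_linear)

lemma add1[simp]: "trip (a + a') b c = trip a b c + trip a' b c" using module_hom.add[OF mh1] .
lemma add2[simp]: "trip a (b + b') c = trip a b c + trip a b' c" using module_hom.add[OF mh2] .
lemma add3[simp]: "trip a b (c + c') = trip a b c + trip a b c'" using module_hom.add[OF mh3] .
lemma diff1[simp]: "trip (a - a') b c = trip a b c - trip a' b c" using module_hom.diff[OF mh1] .
lemma diff2[simp]: "trip a (b - b') c = trip a b c - trip a b' c" using module_hom.diff[OF mh2] .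
lemma diff3[simp]: "trip a b (c - c') = trip a b c - trip a b c'" using module_hom.diff[OF mh3] .
lemma neg1[simp]: "trip (- a) b c = - trip a b c" using module_hom.neg[OF mh1] .
lemma neg2[simp]: "trip a (- b) c = - trip a b c" using module_hom.neg[OF mh2] .
lemma neg3[simp]: "trip a b (- c) = - trip a b c" using module_hom.neg[OF mh3] .
lemma zero1[simp]: "trip 0 b c = 0" using module_hom.zero[OF mh1] .
lemma zero2[simp]: "trip a 0 c = 0" using module_hom.zero[OF mh2] .
lemma zero3[simp]: "trip a b 0 = 0" using module_hom.zero[OF mh3] .
lemma sc1[simp]: "trip (scale k a) b c = scale k (trip a b c)" using module_hom.scale[OF mh1] .
lemma sc2[simp]: "trip a (scale k b) c = scale k (trip a b c)" using module_hom.scale[OF mh2] .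
lemma sc3[simp]: "trip a b (scale k c) = scale k (trip a b c)" using module_hom.scale[OF mh3] .

definition "sn u v w = trip w u v - trip w v u"

lemma I1: "trip (trip x y z) e w = trip x y (trip z e w) + trip (trip x y e) z w + sn z e (trip x y w)"
  by (simp add: sn_def id1 id2 algebra_simps)
lemma I2: "trip w (trip x y z) e - trip w e (trip x y z) = sn z e (sn x y w) - sn x y (sn z e w) + trip w (trip x y e) z - trip w z (trip x y e)"
  by (simp add: sn_def id1 id2 algebra_simps)
lemma Ssnd: "trip w (trip x y u) v - trip w v (trip x y u) - trip w (trip x y v) u + trip w u (trip x y v) = sn u v (sn x y w) - sn x y (sn u v w)"
  by (simp add: sn_def id1 id2 algebra_simps)
lemma Sfst: "trip (trip x y u) v w - trip (trip x y v) u w = trip x y (trip u v w) + sn u v (trip x y w)"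
  by (simp add: sn_def id1 id2 algebra_simps)
lemma Der: "sn u v (trip a b c) = trip (sn u v a) b c + trip a (sn u v b) c + trip a b (sn u v c)"
  by (simp add: sn_def id1 id2 algebra_simps)
lemma Ann: "trip a b (trip u v w) + trip a b (sn u v w) = 0"
  by (simp add: sn_def id1 id2 algebra_simps)

sublocale vs: vector_space scale by (rule VS)

lemma img_fst_Nil[simp]: "fst (l0_img trip []) w = 0" by (simp add: l0_img_def)
lemma img_snd_Nil[simp]: "snd (l0_img trip []) w = 0" by (simp add: l0_img_def)
lemma img_fst_Cons[simp]: "fst (l0_img trip (p#xs)) w = trip (fst p) (snd p) w + fst (l0_img trip xs) w"
  by (cases p) (simp add: l0_img_def)
lemma img_snd_Cons[simp]: "snd (l0_img trip (p#xs)) w = sn (fst p) (snd p) w + snd (l0_img trip xs) w"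
  by (cases p) (simp add: l0_img_def sn_def)
lemma img_fst_app[simp]: "fst (l0_img trip (xs @ ys)) w = fst (l0_img trip xs) w + fst (l0_img trip ys) w"
  by (induction xs) (simp_all add: algebra_simps)
lemma img_snd_app[simp]: "snd (l0_img trip (xs @ ys)) w = snd (l0_img trip xs) w + snd (l0_img trip ys) w"
  by (induction xs) (simp_all add: algebra_simps)

lemma sn_add[simp]: "sn u v (a + b) = sn u v a + sn u v b" by (simp add: sn_def algebra_simps)
lemma sn_diff[simp]: "sn u v (a - b) = sn u v a - sn u v b" by (simp add: sn_def algebra_simps)
lemma sn_neg[simp]: "sn u v (- a) = - sn u v a" by (simp add: sn_def algebra_simps)
lemma sn_zero[simp]: "sn u v 0 = 0" by (simp add: sn_def)
lemma sn_scale[simp]: "sn u v (scale k a) = scale k (sn u v a)" by (simp add: sn_def vs.scale_right_diff_distrib)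

lemma F_add[simp]: "fst (l0_img trip xs) (a + b) = fst (l0_img trip xs) a + fst (l0_img trip xs) b"
  by (induction xs) (simp_all add: algebra_simps)
lemma F_diff[simp]: "fst (l0_img trip xs) (a - b) = fst (l0_img trip xs) a - fst (l0_img trip xs) b"
  by (induction xs) (simp_all add: algebra_simps)
lemma F_neg[simp]: "fst (l0_img trip xs) (- a) = - fst (l0_img trip xs) a"
  by (induction xs) (simp_all add: algebra_simps)
lemma F_zero[simp]: "fst (l0_img trip xs) 0 = 0"
  by (induction xs) (simp_all add: algebra_simps)
lemma F_scale[simp]: "fst (l0_img trip xs) (scale k a) = scale k (fst (l0_img trip xs) a)"
  by (induction xs) (simp_all add: vs.scale_right_distrib)
lemma G_add[simp]: "snd (l0_img trip xs) (a + b) = snd (l0_img trip xs) a + snd (l0_img trip xs) b"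
  by (induction xs) (simp_all add: algebra_simps)
lemma G_diff[simp]: "snd (l0_img trip xs) (a - b) = snd (l0_img trip xs) a - snd (l0_img trip xs) b"
  by (induction xs) (simp_all add: algebra_simps)
lemma G_neg[simp]: "snd (l0_img trip xs) (- a) = - snd (l0_img trip xs) a"
  by (induction xs) (simp_all add: algebra_simps)
lemma G_zero[simp]: "snd (l0_img trip xs) 0 = 0"
  by (induction xs) (simp_all add: algebra_simps)
lemma G_scale[simp]: "snd (l0_img trip xs) (scale k a) = scale k (snd (l0_img trip xs) a)"
  by (induction xs) (simp_all add: vs.scale_right_distrib)

lemma G_der: "snd (l0_img trip ys) (trip a b c) = trip (snd (l0_img trip ys) a) b c + trip a (snd (l0_img trip ys) b) c + trip a b (snd (l0_img trip ys) c)"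
  by (induction ys) (simp_all add: Der algebra_simps)

lemma G_ann: "trip a b (fst (l0_img trip ys) w) + trip a b (snd (l0_img trip ys) w) = 0"
proof (induction ys)
  case Nil then show ?case by simp
next
  case (Cons p ys)
  have "trip a b (trip (fst p) (snd p) w) + trip a b (sn (fst p) (snd p) w) = 0" by (rule Ann)
  with Cons show ?case by (simp add: algebra_simps)
qed

lemma brk_Cons: "brk_rep trip (p#xs) ys = concat (map (\<lambda>(u, v). [(trip (fst p) (snd p) u, v), (- trip (fst p) (snd p) v, u)]) ys) @ brk_rep trip xs ys"
  by (cases p) (simp add: brk_rep_def)

lemma brk1_fst: "fst (l0_img trip (concat (map (\<lambda>(u, v). [(trip x y u, v), (- trip x y v, u)]) ys))) w
   = trip x y (fst (l0_img trip ys) w) + snd (l0_img trip ys) (trip x y w)"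
proof (induction ys)
  case Nil then show ?case by simp
next
  case (Cons p ys)
  obtain u v where p: "p = (u,v)" by (cases p)
  have "trip (trip x y u) v w - trip (trip x y v) u w = trip x y (trip u v w) + sn u v (trip x y w)" by (rule Sfst)
  with Cons show ?case by (simp add: p algebra_simps)
qed

lemma brk1_snd: "snd (l0_img trip (concat (map (\<lambda>(u, v). [(trip x y u, v), (- trip x y v, u)]) ys))) w
   = snd (l0_img trip ys) (sn x y w) - sn x y (snd (l0_img trip ys) w)"
proof (induction ys)
  case Nil then show ?case by simp
next
  case (Cons p ys)
  obtain u v where p: "p = (u,v)" by (cases p)
  have "trip w (trip x y u) v - trip w v (trip x y u) - trip w (trip x y v) u + trip w u (trip x y v) = sn u v (sn x y w) - sn x y (sn u v w)" by (rule Ssnd)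
  with Cons show ?case by (simp add: p sn_def algebra_simps)
qed

lemma brk_fst: "fst (l0_img trip (brk_rep trip xs ys)) w
   = fst (l0_img trip xs) (fst (l0_img trip ys) w) + snd (l0_img trip ys) (fst (l0_img trip xs) w)"
proof (induction xs)
  case Nil then show ?case by (simp add: brk_rep_def)
next
  case (Cons p xs)
  show ?case unfolding brk_Cons img_fst_app brk1_fst Cons by (simp add: algebra_simps)
qed

lemma brk_snd: "snd (l0_img trip (brk_rep trip xs ys)) w
   = snd (l0_img trip ys) (snd (l0_img trip xs) w) - snd (l0_img trip xs) (snd (l0_img trip ys) w)"
proof (induction xs)
  case Nil then show ?case by (simp add: brk_rep_def)
next
  case (Cons p xs)
  show ?case unfolding brk_Cons img_snd_app brk1_snd Cons by (simp add: algebra_simps)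
qed

lemma br_L0L0_eq:
  assumes "D \<in> L0 trip" "E \<in> L0 trip"
  shows "br_L0L0 trip D E = ((\<lambda>w. fst D (fst E w) + snd E (fst D w)), (\<lambda>w. snd E (snd D w) - snd D (snd E w)))"
proof -
  let ?xs = "SOME xs. l0_img trip xs = D" and ?ys = "SOME ys. l0_img trip ys = E"
  have "\<exists>xs. l0_img trip xs = D" "\<exists>ys. l0_img trip ys = E" using assms by (auto simp: L0_def)
  hence x: "l0_img trip ?xs = D" and y: "l0_img trip ?ys = E" by (auto intro: someI_ex)
  show ?thesis unfolding br_L0L0_def
    by (rule prod_eqI) (simp_all add: fun_eq_iff brk_fst brk_snd x y)
qed


lemma T_root_zero[simp]: "H \<subseteq> L0 trip \<Longrightarrow> 0 \<in> T_root scale H a"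
  by (auto simp: T_root_def br_TL0_def L0_def)

lemma weight_trip:
  assumes HL: "H \<subseteq> L0 trip" and x: "x \<in> T_root scale H a" and y: "y \<in> T_root scale H b"
    and z: "z \<in> T_root scale H c"
  shows "trip x y z \<in> T_root scale H (\<lambda>h. a h + b h + c h)"
  unfolding T_root_def br_TL0_def
proof (intro CollectI ballI)
  fix h assume h: "h \<in> H"
  then obtain ys where hy: "h = l0_img trip ys" using HL by (auto simp: L0_def)
  have "snd h x = scale (a h) x" "snd h y = scale (b h) y" "snd h z = scale (c h) z"
    using x y z h by (auto simp: T_root_def br_TL0_def)
  then show "snd h (trip x y z) = scale (a h + b h + c h) (trip x y z)"
    using G_der[of ys x y z] by (simp add: hy vs.scale_left_distrib)
qed

lemma TT_zero_iff: "br_TT trip a b = l0_zero \<longleftrightarrow> (\<forall>w. trip a b w = 0) \<and> (\<forall>w. sn a b w = 0)"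
  by (simp add: br_TT_def l0_zero_def prod_eq_iff fun_eq_iff)

lemma TT_fst[simp]: "fst (br_TT trip a b) w = trip a b w" by (simp add: br_TT_def)
lemma TT_snd[simp]: "snd (br_TT trip a b) w = sn a b w" by (simp add: br_TT_def)

lemma weight_TT:
  assumes HL: "H \<subseteq> L0 trip" and x: "x \<in> T_root scale H a" and y: "y \<in> T_root scale H b"
  shows "br_TT trip x y \<in> L0_root scale trip H (\<lambda>h. a h + b h)"
  unfolding L0_root_def
proof (intro CollectI conjI ballI)
  show "br_TT trip x y \<in> L0 trip" by (simp add: br_TT_def L0_def)
  fix h assume h: "h \<in> H"
  then obtain ys where hy: "h = l0_img trip ys" using HL by (auto simp: L0_def)
  have hx: "snd h x = scale (a h) x" and hyy: "snd h y = scale (b h) y"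
    using x y h by (auto simp: T_root_def br_TL0_def)
  have "br_L0L0 trip (br_TT trip x y) h = ((\<lambda>w. fst (br_TT trip x y) (fst h w) + snd h (fst (br_TT trip x y) w)), (\<lambda>w. snd h (snd (br_TT trip x y) w) - snd (br_TT trip x y) (snd h w)))"
    using h HL by (intro br_L0L0_eq) (auto simp: br_TT_def L0_def)
  also have "\<dots> = l0_scale scale (a h + b h) (br_TT trip x y)"
  proof (rule prod_eqI; rule ext)
    fix w
    have "trip x y (fst h w) + trip x y (snd h w) = 0" using G_ann[of x y ys w] by (simp add: hy)
    then show "fst ((\<lambda>w. fst (br_TT trip x y) (fst h w) + snd h (fst (br_TT trip x y) w)), (\<lambda>w. snd h (snd (br_TT trip x y) w) - snd (br_TT trip x y) (snd h w))) w = fst (l0_scale scale (a h + b h) (br_TT trip x y)) w"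
      using G_der[of ys x y w] hx hyy by (simp add: hy l0_scale_def vs.scale_left_distrib algebra_simps)
  next
    fix w
    show "snd ((\<lambda>w. fst (br_TT trip x y) (fst h w) + snd h (fst (br_TT trip x y) w)), (\<lambda>w. snd h (snd (br_TT trip x y) w) - snd (br_TT trip x y) (snd h w))) w = snd (l0_scale scale (a h + b h) (br_TT trip x y)) w"
      using G_der[of ys w x y] G_der[of ys w y x] hx hyy
      by (simp add: hy l0_scale_def sn_def vs.scale_left_distrib vs.scale_right_diff_distrib algebra_simps)
  qed
  finally show "br_L0L0 trip (br_TT trip x y) h = l0_scale scale (a h + b h) (br_TT trip x y)" .
qed

lemma weight_snd:
  assumes HL: "H \<subseteq> L0 trip" and D: "D \<in> L0_root scale trip H e" and z: "z \<in> T_root scale H b"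
  shows "snd D z \<in> T_root scale H (\<lambda>h. b h + e h)"
  unfolding T_root_def br_TL0_def
proof (intro CollectI ballI)
  fix h assume h: "h \<in> H"
  then obtain ys where hy: "h = l0_img trip ys" using HL by (auto simp: L0_def)
  obtain xs where dx: "D = l0_img trip xs" using D by (auto simp: L0_root_def L0_def)
  have hz: "snd h z = scale (b h) z" using z h by (auto simp: T_root_def br_TL0_def)
  have "br_L0L0 trip D h = l0_scale scale (e h) D" using D h by (auto simp: L0_root_def)
  moreover have "br_L0L0 trip D h = ((\<lambda>w. fst D (fst h w) + snd h (fst D w)), (\<lambda>w. snd h (snd D w) - snd D (snd h w)))"
    using h HL D by (intro br_L0L0_eq) (auto simp: L0_root_def)
  ultimately have "snd h (snd D z) - snd D (snd h z) = scale (e h) (snd D z)"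
    by (simp add: l0_scale_def prod_eq_iff fun_eq_iff)
  then show "snd h (snd D z) = scale (b h + e h) (snd D z)"
    using hz by (simp add: dx vs.scale_left_distrib algebra_simps)
qed


end

lemma psum_Suc: "psum a (Suc m) = (\<lambda>h. psum a m h + a (Suc m) h)"
  by (simp add: psum_def)

lemma psum_cong: "(\<And>i. 1 \<le> i \<Longrightarrow> i \<le> m \<Longrightarrow> a i = a' i) \<Longrightarrow> psum a m = psum a' m"
  unfolding psum_def by (intro ext sum.cong) auto

lemma chain_ext:
  fixes L1 L0' :: "('a \<Rightarrow> 'k::ab_group_add) set"
  assumes A1: "\<forall>i\<in>{1..2*n+1}. a i \<in> L1 \<union> {(\<lambda>_. 0)}"
    and A2: "\<forall>k\<le>n. psum a (2*k+1) \<in> L1"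
    and A3: "\<forall>k\<in>{1..n}. psum a (2*k) \<in> L0'"
    and p: "psum a (2*n+1) = p"
    and g: "g \<in> L1 \<union> {(\<lambda>_. 0)}" and d: "d \<in> L1 \<union> {(\<lambda>_. 0)}"
    and pg: "(\<lambda>h. p h + g h) \<in> L0'" and pgd: "(\<lambda>h. p h + g h + d h) \<in> L1"
  shows "\<exists>n' a'. (\<forall>i\<in>{1..2*n'+1}. a' i \<in> L1 \<union> {(\<lambda>_. 0)}) \<and>
            (\<forall>k\<le>n'. psum a' (2*k+1) \<in> L1) \<and>
            (\<forall>k\<in>{1..n'}. psum a' (2*k) \<in> L0') \<and>
            a' 1 = a 1 \<and> psum a' (2*n'+1) = (\<lambda>h. p h + g h + d h)"
proof -
  define a' where "a' = (\<lambda>i. if i = 2*n+2 then g else if i = 2*n+3 then d else a i)"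
  have same: "psum a' m = psum a m" if "m \<le> 2*n+1" for m
    using that by (intro psum_cong) (auto simp: a'_def)
  have s2: "psum a' (2*n+2) = (\<lambda>h. p h + g h)"
    using same[of "2*n+1"] p psum_Suc[of a' "2*n+1"] by (simp add: a'_def)
  have s3: "psum a' (Suc (2*n+2)) = (\<lambda>h. p h + g h + d h)"
    using s2 psum_Suc[of a' "2*n+2"] by (simp add: a'_def)
  show ?thesis
  proof (intro exI[of _ "Suc n"] exI[of _ a'] conjI)
    show "\<forall>i\<in>{1..2*Suc n+1}. a' i \<in> L1 \<union> {(\<lambda>_. 0)}"
      using A1 g d by (auto simp: a'_def)
    show "\<forall>k\<le>Suc n. psum a' (2*k+1) \<in> L1"
    proof (intro allI impI)
      fix k assume "k \<le> Suc n"
      then consider "k \<le> n" | "k = Suc n" by linarith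
      then show "psum a' (2*k+1) \<in> L1"
      proof cases
        case 1 then show ?thesis using same[of "2*k+1"] A2 by auto
      next
        case 2 then show ?thesis using s3 pgd by (simp add: numeral_eq_Suc)
      qed
    qed
    show "\<forall>k\<in>{1..Suc n}. psum a' (2*k) \<in> L0'"
    proof
      fix k assume "k \<in> {1..Suc n}"
      then consider "k \<in> {1..n}" | "k = Suc n" by fastforce
      then show "psum a' (2*k) \<in> L0'"
      proof cases
        case 1 then show ?thesis using same[of "2*k"] A3 by auto
      next
        case 2 then show ?thesis using s2 pg by (simp add: numeral_eq_Suc)
      qed
    qed
    show "a' 1 = a 1" by (simp add: a'_def)
    show "psum a' (2*Suc n+1) = (\<lambda>h. p h + g h + d h)" using s3 by (simp add: numeral_eq_Suc)
  qed
qed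

lemma conn_ext:
  fixes L1 L0' :: "('a \<Rightarrow> 'k::ab_group_add) set"
  assumes s1: "symmetric_roots L1" and s0: "symmetric_roots L0'"
    and c: "roots_connected L1 L0' a0 b"
    and g: "g \<in> L1 \<union> {(\<lambda>_. 0)}" and d: "d \<in> L1 \<union> {(\<lambda>_. 0)}"
    and bg: "(\<lambda>h. b h + g h) \<in> L0'" and bgd: "(\<lambda>h. b h + g h + d h) \<in> L1"
  shows "roots_connected L1 L0' a0 (\<lambda>h. b h + g h + d h)"
proof -
  obtain n a where A1: "\<forall>i\<in>{1..2*n+1}. a i \<in> L1 \<union> {(\<lambda>_. 0)}"
    and A2: "\<forall>k\<le>n. psum a (2*k+1) \<in> L1" and A3: "\<forall>k\<in>{1..n}. psum a (2*k) \<in> L0'"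
    and A4: "a 1 = a0" and A5: "psum a (2*n+1) = b \<or> psum a (2*n+1) = (\<lambda>h. - b h)"
    using c unfolding roots_connected_def by blast
  from A5 show ?thesis
  proof
    assume p: "psum a (2*n+1) = b"
    from chain_ext[OF A1 A2 A3 p g d bg bgd] A4 show ?thesis
      unfolding roots_connected_def by metis
  next
    assume p: "psum a (2*n+1) = (\<lambda>h. - b h)"
    have g': "(\<lambda>h. - g h) \<in> L1 \<union> {(\<lambda>_. 0)}" using g s1 by (auto simp: symmetric_roots_def)
    have d': "(\<lambda>h. - d h) \<in> L1 \<union> {(\<lambda>_. 0)}" using d s1 by (auto simp: symmetric_roots_def)
    have pg: "(\<lambda>h. - b h + - g h) \<in> L0'" using bg s0 unfolding symmetric_roots_def
      by (metis (no_types, lifting) ext minus_add_distrib)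
    have pgd: "(\<lambda>h. - b h + - g h + - d h) \<in> L1" using bgd s1 unfolding symmetric_roots_def
      by (metis (no_types, lifting) ext minus_add_distrib)
    have e: "(\<lambda>h. - b h + - g h + - d h) = (\<lambda>h. - (b h + g h + d h))" by (simp add: algebra_simps)
    from chain_ext[OF A1 A2 A3 p g' d' pg pgd] A4 e show ?thesis
      unfolding roots_connected_def by metis
  qed
qed

lemma conn_neg: "roots_connected L1 L0' a0 b \<Longrightarrow> roots_connected L1 L0' a0 (\<lambda>h. - (b h :: 'k::ab_group_add))"
  unfolding roots_connected_def by auto

lemma dual_add: "a \<in> dual_H scale H \<Longrightarrow> b \<in> dual_H scale H \<Longrightarrow> (\<lambda>h. a h + b h) \<in> dual_H scale H"
  by (simp add: dual_H_def algebra_simps)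
lemma dual_neg: "a \<in> dual_H scale H \<Longrightarrow> (\<lambda>h. - a h) \<in> dual_H scale H"
  by (simp add: dual_H_def algebra_simps)
lemma dual_zero: "(\<lambda>_. 0) \<in> dual_H scale H"
  by (simp add: dual_H_def)

lemma L1I: "g \<in> dual_H scale H \<Longrightarrow> g \<noteq> (\<lambda>_. 0) \<Longrightarrow> s \<in> T_root scale H g \<Longrightarrow> s \<noteq> 0 \<Longrightarrow> g \<in> Lambda1 scale H"
  unfolding Lambda1_def by auto
lemma L0I: "g \<in> dual_H scale H \<Longrightarrow> g \<noteq> (\<lambda>_. 0) \<Longrightarrow> X \<in> L0_root scale trip H g \<Longrightarrow> X \<noteq> l0_zero \<Longrightarrow> g \<in> Lambda0 scale trip H"
  unfolding Lambda0_def by auto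


theorem lemma3p5:
  fixes scale :: "'k::field \<Rightarrow> 'v::ab_group_add \<Rightarrow> 'v"
    and trip :: "'v \<Rightarrow> 'v \<Rightarrow> 'v \<Rightarrow> 'v"
    and H :: "'v L0elem set"
    and \<alpha>0 \<alpha>1 \<alpha>2 \<alpha>3 \<epsilon> :: "'v L0elem \<Rightarrow> 'k"
  assumes lts: "leibniz_triple_system scale trip"
    and H: "max_abelian_subalg_L0 scale trip H"
    and split: "split_LTS scale trip H"
    and sym1: "symmetric_roots (Lambda1 scale H)"
    and sym0: "symmetric_roots (Lambda0 scale trip H)"
    and a0: "\<alpha>0 \<in> Lambda1 scale H"
    and a1: "\<alpha>1 \<in> connected_class (Lambda1 scale H) (Lambda0 scale trip H) \<alpha>0 \<union> {(\<lambda>_. 0)}"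
    and a2: "\<alpha>2 \<in> connected_class (Lambda1 scale H) (Lambda0 scale trip H) \<alpha>0 \<union> {(\<lambda>_. 0)}"
    and a3: "\<alpha>3 \<in> connected_class (Lambda1 scale H) (Lambda0 scale trip H) \<alpha>0 \<union> {(\<lambda>_. 0)}"
    and sum0: "\<And>h. \<alpha>1 h + \<alpha>2 h + \<alpha>3 h = 0"
    and eps: "\<epsilon> \<in> Lambda1 scale H - connected_class (Lambda1 scale H) (Lambda0 scale trip H) \<alpha>0"
  shows
    "(\<forall>x\<in>T_root scale H \<alpha>1. \<forall>y\<in>T_root scale H \<alpha>2. \<forall>z\<in>T_root scale H \<alpha>3.
        \<forall>e\<in>T_root scale H \<epsilon>. br_TT trip (trip x y z) e = l0_zero)
   \<and> (\<epsilon> \<in> Lambda0 scale trip H \<longrightarrow>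
       (\<forall>x\<in>T_root scale H \<alpha>1. \<forall>y\<in>T_root scale H \<alpha>2. \<forall>z\<in>T_root scale H \<alpha>3.
          \<forall>D\<in>L0_root scale trip H \<epsilon>. br_TL0 (trip x y z) D = 0))
   \<and> (\<forall>x\<in>T_root scale H \<alpha>1. \<forall>y\<in>T_root scale H \<alpha>2. \<forall>z\<in>T_root scale H \<alpha>3.
        \<forall>t\<in>T_root scale H (\<lambda>_. 0). \<forall>e\<in>T_root scale H \<epsilon>.
          br_L0T (br_TT trip (trip x y z) t) e = 0)"
proof -
  interpret LTS scale trip by (rule LTS.intro) (rule lts)
  let ?L1 = "Lambda1 scale H" and ?L0 = "Lambda0 scale trip H"
  let ?C = "connected_class ?L1 ?L0 \<alpha>0"
  let ?Z = "(\<lambda>_. 0) :: 'v L0elem \<Rightarrow> 'k"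
  have HL: "H \<subseteq> L0 trip" using H by (simp add: max_abelian_subalg_L0_def abelian_subalg_L0_def)
  have L1d: "\<And>g. g \<in> ?L1 \<Longrightarrow> g \<in> dual_H scale H" by (simp add: Lambda1_def)
  have L1nz: "\<And>g. g \<in> ?L1 \<Longrightarrow> g \<noteq> ?Z" by (simp add: Lambda1_def)
  have CL1: "\<And>g. g \<in> ?C \<Longrightarrow> g \<in> ?L1" by (simp add: connected_class_def)
  have Cc: "\<And>g. g \<in> ?C \<Longrightarrow> roots_connected ?L1 ?L0 \<alpha>0 g" by (simp add: connected_class_def)
  have CI: "\<And>g. g \<in> ?L1 \<Longrightarrow> roots_connected ?L1 ?L0 \<alpha>0 g \<Longrightarrow> g \<in> ?C" by (simp add: connected_class_def)
  have Cneg: "\<And>g. g \<in> ?C \<Longrightarrow> (\<lambda>h. - g h) \<in> ?C"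
    using sym1 by (auto simp: connected_class_def symmetric_roots_def intro: conn_neg)
  have epsL1: "\<epsilon> \<in> ?L1" and epsC: "\<epsilon> \<notin> ?C" using eps by auto
  have epsd: "\<epsilon> \<in> dual_H scale H" using L1d epsL1 .
  have Tcong: "\<And>f g. f = g \<Longrightarrow> T_root scale H f = T_root scale H g" by simp

  have Zc: "X = l0_zero" if b: "\<beta> \<in> ?C" and g: "\<gamma> \<in> ?L1" "\<gamma> \<notin> ?C"
      and X: "X \<in> L0_root scale trip H (\<lambda>h. \<beta> h + \<gamma> h)" for \<beta> \<gamma> X
  proof (rule ccontr)
    assume Xn: "X \<noteq> l0_zero"
    show False
    proof (cases "(\<lambda>h. \<beta> h + \<gamma> h) = ?Z")
      case True
      hence "\<gamma> = (\<lambda>h. - \<beta> h)" by (auto simp: fun_eq_iff eq_neg_iff_add_eq_0 add.commute)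
      with Cneg[OF b] g show False by simp
    next
      case False
      have "(\<lambda>h. \<beta> h + \<gamma> h) \<in> ?L0"
        by (rule L0I[OF dual_add[OF L1d[OF CL1[OF b]] L1d[OF g(1)]] False X Xn])
      moreover have "(\<lambda>h. - \<beta> h) \<in> ?L1" using sym1 CL1[OF b] by (simp add: symmetric_roots_def)
      ultimately have "roots_connected ?L1 ?L0 \<alpha>0 (\<lambda>h. \<beta> h + \<gamma> h + - \<beta> h)"
        using conn_ext[OF sym1 sym0 Cc[OF b], of \<gamma> "\<lambda>h. - \<beta> h"] g(1) by simp
      hence "roots_connected ?L1 ?L0 \<alpha>0 \<gamma>" by simp
      with g CI show False by blast
    qed
  qed
  have G1: "\<forall>w. trip z e w = 0 \<and> sn z e w = 0" if "\<beta> \<in> ?C" "\<gamma> \<in> ?L1" "\<gamma> \<notin> ?C"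
      "z \<in> T_root scale H \<beta>" "e \<in> T_root scale H \<gamma>" for \<beta> \<gamma> z e
    using Zc[OF that(1-3) weight_TT[OF HL that(4,5)]] by (simp add: TT_zero_iff)
  have G2: "\<forall>w. trip e z w = 0 \<and> sn e z w = 0" if "\<beta> \<in> ?C" "\<gamma> \<in> ?L1" "\<gamma> \<notin> ?C"
      "z \<in> T_root scale H \<beta>" "e \<in> T_root scale H \<gamma>" for \<beta> \<gamma> z e
  proof -
    have "(\<lambda>h. \<gamma> h + \<beta> h) = (\<lambda>h. \<beta> h + \<gamma> h)" by (simp add: add.commute)
    with weight_TT[OF HL that(5,4)] have "br_TT trip e z \<in> L0_root scale trip H (\<lambda>h. \<beta> h + \<gamma> h)" by simp
    from Zc[OF that(1-3) this] show ?thesis by (simp add: TT_zero_iff)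
  qed
  have G3: "snd D z = 0" if b: "\<beta> \<in> ?C" and e0: "\<epsilon> \<in> ?L0" and D: "D \<in> L0_root scale trip H \<epsilon>"
      and z: "z \<in> T_root scale H \<beta>" for \<beta> D z
  proof (rule ccontr)
    assume nz: "snd D z \<noteq> 0"
    have w: "snd D z \<in> T_root scale H (\<lambda>h. \<beta> h + \<epsilon> h)" by (rule weight_snd[OF HL D z])
    have ne: "(\<lambda>h. \<beta> h + \<epsilon> h) \<noteq> ?Z"
    proof
      assume "(\<lambda>h. \<beta> h + \<epsilon> h) = ?Z"
      hence "\<epsilon> = (\<lambda>h. - \<beta> h)" by (auto simp: fun_eq_iff eq_neg_iff_add_eq_0 add.commute)
      with Cneg[OF b] epsC show False by simp
    qed
    have bl: "(\<lambda>h. \<beta> h + \<epsilon> h) \<in> ?L1"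
      by (rule L1I[OF dual_add[OF L1d[OF CL1[OF b]] epsd] ne w nz])
    have e1: "(\<lambda>h. - \<beta> h + (\<beta> h + \<epsilon> h)) = \<epsilon>" by simp
    have e2: "(\<lambda>h. - \<beta> h + (\<beta> h + \<epsilon> h) + 0) = \<epsilon>" by simp
    have "roots_connected ?L1 ?L0 \<alpha>0 (\<lambda>h. - \<beta> h + (\<beta> h + \<epsilon> h) + 0)"
      by (rule conn_ext[OF sym1 sym0 Cc[OF Cneg[OF b]]]) (use bl e0 epsL1 e1 e2 in auto)
    with e2 have "roots_connected ?L1 ?L0 \<alpha>0 \<epsilon>" by simp
    with CI epsL1 epsC show False by blast
  qed

  have t0: "trip x y z \<in> T_root scale H ?Z" if "x \<in> T_root scale H \<alpha>1" "y \<in> T_root scale H \<alpha>2"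
     "z \<in> T_root scale H \<alpha>3" for x y z
  proof -
    have "(\<lambda>h. \<alpha>1 h + \<alpha>2 h + \<alpha>3 h) = ?Z" using sum0 by auto
    with weight_trip[OF HL that] show ?thesis by simp
  qed

  have triv: "trip x y z = 0" if "\<alpha>3 = ?Z" "x \<in> T_root scale H \<alpha>1" "y \<in> T_root scale H \<alpha>2"
     "z \<in> T_root scale H \<alpha>3" for x y z
  proof (cases "\<alpha>1 = ?Z")
    case True
    hence "\<alpha>2 = ?Z" using sum0 that(1) by (auto simp: fun_eq_iff)
    with True that split show ?thesis by (simp add: split_LTS_def Let_def)
  next
    case False
    hence c1: "\<alpha>1 \<in> ?L1" using a1 CL1 by auto
    have "\<alpha>2 = (\<lambda>h. - \<alpha>1 h)" using sum0 that(1) by (auto simp: fun_eq_iff eq_neg_iff_add_eq_0 add.commute)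
    with c1 that split show ?thesis by (simp add: split_LTS_def Let_def)
  qed

  have P1: "br_TT trip (trip x y z) e = l0_zero" if x: "x \<in> T_root scale H \<alpha>1" and y: "y \<in> T_root scale H \<alpha>2"
     and z: "z \<in> T_root scale H \<alpha>3" and e: "e \<in> T_root scale H \<epsilon>" for x y z e
  proof (cases "\<alpha>3 = ?Z")
    case True
    then show ?thesis using triv[OF True x y z] by (simp add: TT_zero_iff sn_def)
  next
    case False
    hence c3: "\<alpha>3 \<in> ?C" using a3 by auto
    have ze: "\<forall>w. trip z e w = 0 \<and> sn z e w = 0" by (rule G1[OF c3 epsL1 epsC z e])
    define s where "s = trip x y e"
    have eqTT: "br_TT trip (trip x y z) e = br_TT trip s z"
    proof -
      have "\<And>w. trip (trip x y z) e w = trip s z w"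
        using I1[of x y z e] ze by (simp add: s_def)
      moreover have "\<And>w. sn (trip x y z) e w = sn s z w"
        using I2[of _ x y z e] ze by (simp add: s_def sn_def)
      ultimately show ?thesis by (simp add: br_TT_def l0_img_def sn_def)
    qed
    show ?thesis
    proof (cases "s = 0")
      case True
      then show ?thesis using eqTT by (simp add: TT_zero_iff sn_def)
    next
      case False
      let ?g = "\<lambda>h. \<alpha>1 h + \<alpha>2 h + \<epsilon> h"
      have sw: "s \<in> T_root scale H ?g" unfolding s_def by (rule weight_trip[OF HL x y e])
      have gne: "?g \<noteq> ?Z"
      proof
        assume "?g = ?Z"
        hence "\<epsilon> = \<alpha>3" using sum0 by (auto simp: fun_eq_iff) (metis add.commute add_diff_cancel_right' add.assoc diff_add_cancel)
        with c3 epsC show False by simp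
      qed
      have gd: "?g \<in> dual_H scale H"
      proof -
        have "\<alpha>1 \<in> dual_H scale H" "\<alpha>2 \<in> dual_H scale H"
          using a1 a2 CL1 L1d dual_zero by auto
        thus ?thesis using dual_add epsd by blast
      qed
      have gL1: "?g \<in> ?L1" by (rule L1I[OF gd gne sw False])
      show ?thesis
      proof (rule ccontr)
        assume nz: "br_TT trip (trip x y z) e \<noteq> l0_zero"
        have "(\<lambda>h. 0 + \<epsilon> h) = \<epsilon>" by simp
        with weight_TT[OF HL t0[OF x y z] e] have "br_TT trip (trip x y z) e \<in> L0_root scale trip H \<epsilon>" by simp
        hence e0: "\<epsilon> \<in> ?L0" by (rule L0I[OF epsd L1nz[OF epsL1] _ nz])
        have e1: "(\<lambda>h. \<alpha>3 h + ?g h) = \<epsilon>" using sum0 by (auto simp: fun_eq_iff algebra_simps)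
        have e2: "(\<lambda>h. \<alpha>3 h + ?g h + 0) = \<epsilon>" using e1 by simp
        have "roots_connected ?L1 ?L0 \<alpha>0 (\<lambda>h. \<alpha>3 h + ?g h + 0)"
          by (rule conn_ext[OF sym1 sym0 Cc[OF c3]]) (use gL1 e0 epsL1 e1 e2 in auto)
        with e2 have "roots_connected ?L1 ?L0 \<alpha>0 \<epsilon>" by simp
        with CI epsL1 epsC show False by blast
      qed
    qed
  qed

  have P2: "br_TL0 (trip x y z) D = 0" if e0: "\<epsilon> \<in> ?L0" and x: "x \<in> T_root scale H \<alpha>1" and y: "y \<in> T_root scale H \<alpha>2"
     and z: "z \<in> T_root scale H \<alpha>3" and D: "D \<in> L0_root scale trip H \<epsilon>" for x y z D
  proof (cases "\<alpha>3 = ?Z")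
    case True
    obtain xs where dx: "D = l0_img trip xs" using D by (auto simp: L0_root_def L0_def)
    then show ?thesis using triv[OF True x y z] by (simp add: br_TL0_def)
  next
    case False
    hence c3: "\<alpha>3 \<in> ?C" using a3 by auto
    obtain xs where dx: "D = l0_img trip xs" using D by (auto simp: L0_root_def L0_def)
    have der: "snd D (trip x y z) = trip (snd D x) y z + trip x (snd D y) z + trip x y (snd D z)"
      using G_der[of xs x y z] by (simp add: dx)
    have T3: "snd D z = 0" by (rule G3[OF c3 e0 D z])
    have T2: "trip x (snd D y) z = 0"
    proof (cases "\<alpha>2 = ?Z")
      case True
      have "\<alpha>1 \<noteq> ?Z"
      proof
        assume "\<alpha>1 = ?Z"
        with True have "\<alpha>3 = ?Z" using sum0 by (auto simp: fun_eq_iff)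
        with \<open>\<alpha>3 \<noteq> ?Z\<close> show False by simp
      qed
      hence c1: "\<alpha>1 \<in> ?C" using a1 by auto
      have "(\<lambda>h. \<alpha>2 h + \<epsilon> h) = \<epsilon>" using True by simp
      with weight_snd[OF HL D y] have "snd D y \<in> T_root scale H \<epsilon>" by simp
      from G1[OF c1 epsL1 epsC x this] show ?thesis by simp
    next
      case False
      hence c2: "\<alpha>2 \<in> ?C" using a2 by auto
      show ?thesis using G3[OF c2 e0 D y] by simp
    qed
    have T1: "trip (snd D x) y z = 0"
    proof (cases "\<alpha>1 = ?Z")
      case True
      have "\<alpha>2 \<noteq> ?Z"
      proof
        assume "\<alpha>2 = ?Z"
        with True have "\<alpha>3 = ?Z" using sum0 by (auto simp: fun_eq_iff)
        with \<open>\<alpha>3 \<noteq> ?Z\<close> show False by simp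
      qed
      hence c2: "\<alpha>2 \<in> ?C" using a2 by auto
      have "(\<lambda>h. \<alpha>1 h + \<epsilon> h) = \<epsilon>" using True by simp
      with weight_snd[OF HL D x] have "snd D x \<in> T_root scale H \<epsilon>" by simp
      from G2[OF c2 epsL1 epsC y this] show ?thesis by simp
    next
      case False
      hence c1: "\<alpha>1 \<in> ?C" using a1 by auto
      show ?thesis using G3[OF c1 e0 D x] by simp
    qed
    show ?thesis using der T1 T2 T3 by (simp add: br_TL0_def)
  qed

  have P3: "br_L0T (br_TT trip (trip x y z) t) e = 0" if x: "x \<in> T_root scale H \<alpha>1" and y: "y \<in> T_root scale H \<alpha>2"
     and z: "z \<in> T_root scale H \<alpha>3" and t: "t \<in> T_root scale H ?Z" and e: "e \<in> T_root scale H \<epsilon>" for x y z t e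
  proof -
    have dec: "trip (trip x y z) t e = sn t e (trip x y z) + trip (trip x y z) e t" by (simp add: sn_def)
    have A: "trip (trip x y z) e t = 0" using P1[OF x y z e] by (simp add: TT_zero_iff)
    have B: "sn t e (trip x y z) = 0"
    proof (cases "br_TT trip t e = l0_zero")
      case True then show ?thesis by (simp add: TT_zero_iff)
    next
      case False
      have "(\<lambda>h. 0 + \<epsilon> h) = \<epsilon>" by simp
      with weight_TT[OF HL t e] have F: "br_TT trip t e \<in> L0_root scale trip H \<epsilon>" by simp
      hence e0: "\<epsilon> \<in> ?L0" by (rule L0I[OF epsd L1nz[OF epsL1] _ False])
      from P2[OF e0 x y z F] show ?thesis by (simp add: br_TL0_def)
    qed
    show ?thesis using dec A B by (simp add: br_L0T_def)
  qed

  show ?thesis using P1 P2 P3 by blast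
qed
end
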